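(* For every integer $n\ge0$, $$\operatorname{pod}(n)=(-1)^n\sum_{\substack{c\in\mathcal C_{P_3}\\ |c|=n}}(-1)^{\ell(c)},$$ where $P_3=\{m(m+1)/2: m\in\mathbb N\}$ is the set of positive triangular numbers.
   Context: $\operatorname{pod}(n)$ is the number of partitions of $n$ in which odd parts are not repeated (even parts may repeat), with $\operatorname{pod}(0)=1$. A composition is an ordered finite sequence of positive integers (including the empty one); $|c|$ is the sum and $\ell(c)$ the number of parts; $\mathcal C_T$ is the set of compositions with all parts in $T$. *)

theory Defs
  imports Main "HOL-Library.Multiset"
begin

definition partitions :: "nat \<Rightarrow> nat multiset set" where
  "partitions n = {p. (\<forall>x\<in>#p. 0 < x) \<and> sum_mset p = n}"

definition pod :: "nat \<Rightarrow> nat" where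
  "pod n = card {p \<in> partitions n. \<forall>x. odd x \<longrightarrow> count p x \<le> 1}"

definition compositions :: "nat set \<Rightarrow> nat \<Rightarrow> nat list set" where
  "compositions T n = {c. set c \<subseteq> T \<and> (\<forall>x\<in>set c. 0 < x) \<and> sum_list c = n}"

definition P3 :: "nat set" where
  "P3 = {m * (m + 1) div 2 | m. m \<ge> 1}"

end

theory Submission
  imports Defs "HOL-Computational_Algebra.Formal_Power_Series"
begin

unbundle fps_syntax


fun qbin :: "'a::comm_ring_1 \<Rightarrow> nat \<Rightarrow> nat \<Rightarrow> 'a" where
  "qbin q 0 i = (if i = 0 then 1 else 0)"
| "qbin q (Suc m) 0 = 1"
| "qbin q (Suc m) (Suc i) = q^(Suc i) * qbin q m (Suc i) + qbin q m i"

definition poch :: "'a::comm_ring_1 \<Rightarrow> nat \<Rightarrow> 'a" where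
  "poch q k = (\<Prod>t\<in>{1..k}. 1 - q^t)"

lemma poch_0[simp]: "poch q 0 = 1" by (simp add: poch_def)
lemma poch_Suc: "poch q (Suc k) = poch q k * (1 - q^Suc k)"
  by (simp add: poch_def prod.cl_ivl_Suc)

lemma qbin_gt: "i > m \<Longrightarrow> qbin q m i = 0"
proof (induction m arbitrary: i)
  case 0 then show ?case by simp
next
  case (Suc m) then show ?case by (cases i) auto
qed

lemma qbin_m0[simp]: "qbin q m 0 = 1" by (cases m) auto

lemma qbin_mm[simp]: "qbin q m m = 1"
  by (induction m) (auto simp: qbin_gt)

lemma qbin_poch: "i \<le> m \<Longrightarrow> poch q i * poch q (m - i) * qbin q m i = poch q m"
proof (induction m arbitrary: i)
  case 0 then show ?case by simp
next
  case (Suc m i)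
  show ?case
  proof (cases i)
    case 0 then show ?thesis by simp
  next
    case (Suc j)
    show ?thesis
    proof (cases "j = m")
      case True then show ?thesis using Suc by (simp add: qbin_gt)
    next
      case False
      with Suc \<open>i \<le> Suc m\<close> have jm: "j < m" by simp
      have e1: "poch q (Suc j) * poch q (m - Suc j) * qbin q m (Suc j) = poch q m"
        using Suc.IH jm by simp
      have e2: "poch q j * poch q (m - j) * qbin q m j = poch q m"
        using Suc.IH jm by simp
      have mj: "m - j = Suc (m - Suc j)" using jm by simp
      have "poch q i * poch q (Suc m - i) * qbin q (Suc m) i
          = q^(Suc j) * (1 - q^(m-j)) * (poch q (Suc j) * poch q (m - Suc j) * qbin q m (Suc j))
            + (1 - q^Suc j) * (poch q j * poch q (m - j) * qbin q m j)"
        unfolding Suc by (simp add: mj poch_Suc algebra_simps)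
      also have "\<dots> = (1 - q^Suc m) * poch q m"
        unfolding e1 e2 using jm by (simp add: algebra_simps power_add[symmetric])
      finally show ?thesis by (simp add: poch_Suc mult.commute)
    qed
  qed
qed


lemma qbinom_thm:
  fixes q x y :: "'a::comm_ring_1"
  shows "(\<Prod>k<m. y + x*q^k) = (\<Sum>i\<le>m. qbin q m i * q^(i*(i-1) div 2) * x^i * y^(m-i))"
proof (induction m arbitrary: x)
  case 0 then show ?case by simp
next
  case (Suc m x)
  define g where "g i = qbin q m i * q^(i*(i-1) div 2) * (x*q)^i * y^(m-i)" for i
  have tri: "Suc i * (Suc i - 1) div 2 = i*(i-1) div 2 + i" for i
    by (cases i) (auto simp: algebra_simps)
  have "(\<Prod>k<Suc m. y + x*q^k) = (y + x) * (\<Prod>k<m. y + (x*q)*q^k)"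
    unfolding prod.lessThan_Suc_shift by (simp add: mult.assoc)
  also have "\<dots> = (y + x) * (\<Sum>i\<le>m. g i)" using Suc.IH[of "x*q"] by (simp add: g_def)
  finally have L: "(\<Prod>k<Suc m. y + x*q^k) = y * (\<Sum>i\<le>m. g i) + x * (\<Sum>i\<le>m. g i)"
    by (simp add: algebra_simps)
  have R: "(\<Sum>i\<le>Suc m. qbin q (Suc m) i * q^(i*(i-1) div 2) * x^i * y^(Suc m-i))
     = y^Suc m + (\<Sum>i\<le>m. q^(Suc i) * qbin q m (Suc i) * q^(Suc i*(Suc i-1) div 2) * x^(Suc i) * y^(m-i))
       + (\<Sum>i\<le>m. qbin q m i * q^(Suc i*(Suc i-1) div 2) * x^(Suc i) * y^(m-i))"
    unfolding sum.atMost_Suc_shift by (simp add: distrib_right sum.distrib del: sum.atMost_Suc)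
  have X: "x * (\<Sum>i\<le>m. g i) = (\<Sum>i\<le>m. qbin q m i * q^(Suc i*(Suc i-1) div 2) * x^(Suc i) * y^(m-i))"
    unfolding sum_distrib_left g_def tri
    by (rule sum.cong) (auto simp: power_add power_mult_distrib algebra_simps)
  have "y * (\<Sum>i\<le>m. g i) = y * g 0 + (\<Sum>i<m. y * g (Suc i))"
    by (simp add: sum.atMost_shift sum_distrib_left distrib_left)
  also have "y * g 0 = y^Suc m" by (simp add: g_def)
  also have "(\<Sum>i<m. y * g (Suc i)) = (\<Sum>i<m. q^(Suc i) * qbin q m (Suc i) * q^(Suc i*(Suc i-1) div 2) * x^(Suc i) * y^(m-i))"
  proof (rule sum.cong)
    fix i assume "i \<in> {..<m}"
    then have "m - i = Suc (m - Suc i)" by simp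
    then show "y * g (Suc i) = q^(Suc i) * qbin q m (Suc i) * q^(Suc i*(Suc i-1) div 2) * x^(Suc i) * y^(m-i)"
      unfolding g_def tri by (simp add: power_add power_mult_distrib algebra_simps)
  qed simp
  also have "\<dots> = (\<Sum>i\<le>m. q^(Suc i) * qbin q m (Suc i) * q^(Suc i*(Suc i-1) div 2) * x^(Suc i) * y^(m-i))"
    by (simp add: lessThan_Suc_atMost[symmetric] qbin_gt)
  finally show ?case using L R X by simp
qed


definition H :: "'a::comm_ring_1 \<Rightarrow> nat \<Rightarrow> 'a" where "H q M = (\<Prod>s<M. 1 + q^Suc s)"
definition T :: "nat \<Rightarrow> nat" where "T t = t*(t+1) div 2"
definition ex :: "nat \<Rightarrow> nat \<Rightarrow> nat" where
  "ex M i = (if M < i then T (i - M - 1) else T (M - i))"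
definition cc :: "nat \<Rightarrow> nat" where "cc M = M*(3*M+1) div 2"

lemma two_div: "even x \<Longrightarrow> 2 * (x div 2) = (x::nat)" by simp
lemma T2: "2 * T t = t*(t+1)" unfolding T_def by (intro two_div) simp
lemma cc2: "2 * cc M = M*(3*M+1)" unfolding cc_def by (intro two_div) (cases "even M", auto)
lemma tri2: "2 * (i*(i-1) div 2) = i*(i-1::nat)" by (intro two_div) auto

lemma exp_arith:
  assumes "i \<le> 2*M+1"
  shows "i*(i-1) div 2 + M*(2*M+1-i) = cc M + ex M i"
proof -
  have "2*(i*(i-1) div 2 + M*(2*M+1-i)) = 2*(cc M + ex M i)"
  proof (cases "M < i")
    case True
    define s where "s = i - M - 1"
    define r where "r = M - s"
    have s: "i = M + 1 + s" and r: "M = s + r" using True assms unfolding s_def r_def by auto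
    have d: "2*M+1-i = r" using s r by simp
    have c: "2*(ex M i) = s*(s+1)" using True s T2 unfolding ex_def by simp
    have e: "i*(i-1) = (s+r+1+s)*(s+r+s)" using s r by simp
    have "2*(i*(i-1) div 2 + M*(2*M+1-i)) = 2*(i*(i-1) div 2) + 2*(M*(2*M+1-i))"
      by (rule add_mult_distrib2)
    also have "\<dots> = (s+r+1+s)*(s+r+s) + 2*((s+r)*r)"
      unfolding tri2 d unfolding e r by (rule refl)
    also have "\<dots> = (s+r)*(3*(s+r)+1) + s*(s+1)" by (simp add: algebra_simps)
    also have "\<dots> = 2*(cc M + ex M i)"
      using arg_cong2[OF cc2 c, of "(+)"] r by (simp add: add_mult_distrib2)
    finally show ?thesis .
  next
    case False
    define s where "s = M - i"
    have s: "M = i + s" using False unfolding s_def by auto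
    have d: "2*M+1-i = i+2*s+1" using s by simp
    have c: "2*(ex M i) = s*(s+1)" using False s T2 unfolding ex_def by simp
    have "2*(i*(i-1) div 2 + M*(2*M+1-i)) = 2*(i*(i-1) div 2) + 2*(M*(2*M+1-i))"
      by (rule add_mult_distrib2)
    also have "\<dots> = i*(i-1) + 2*((i+s)*(i+2*s+1))"
      unfolding tri2 d unfolding s by (rule refl)
    also have "\<dots> = (i+s)*(3*(i+s)+1) + s*(s+1)" by (cases i) (simp_all add: algebra_simps)
    also have "\<dots> = 2*(cc M + ex M i)"
      using arg_cong2[OF cc2 c, of "(+)"] s by (simp add: add_mult_distrib2)
    finally show ?thesis .
  qed
  then show ?thesis by simp
qed

lemma prod_low: "(\<Prod>k<M. q^M + q^k) = q^(M*(M-1) div 2) * H q M"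
proof (induction M)
  case 0 then show ?case by (simp add: H_def)
next
  case (Suc M)
  have ex: "Suc M * (Suc M - 1) div 2 = M + M*(M-1) div 2"
    by (cases M) (auto simp: algebra_simps)
  have "(\<Prod>k<Suc M. q^Suc M + q^k) = (q^Suc M + 1) * (\<Prod>k<M. q * (q^M + q^k))"
    unfolding prod.lessThan_Suc_shift by (simp add: algebra_simps)
  also have "(\<Prod>k<M. q * (q^M + q^k)) = q^M * (\<Prod>k<M. q^M + q^k)"
    by (simp add: prod.distrib)
  finally show ?case using Suc.IH unfolding ex by (simp add: H_def power_add algebra_simps del: prod.lessThan_Suc_shift)
qed

lemma prod_split: "(\<Prod>k<a+(b::nat). f k) = (\<Prod>k<a. f k) * (\<Prod>s<b. f (a+s))"
  by (induction b) (auto simp: algebra_simps)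

lemma prod_high: "(\<Prod>s<Suc M. q^M + q^(M+s)) = q^(M*Suc M) * (2 * H q M)"
proof -
  have "(\<Prod>s<Suc M. q^M + q^(M+s)) = (\<Prod>s<Suc M. q^M * (1 + q^s))"
    by (simp add: power_add algebra_simps)
  also have "\<dots> = q^(M*Suc M) * (\<Prod>s<Suc M. 1 + q^s)"
    by (subst prod.distrib) (simp add: power_mult[symmetric] power_add del: prod.lessThan_Suc)
  also have "(\<Prod>s<Suc M. 1 + q^s) = 2 * H q M"
    unfolding prod.lessThan_Suc_shift H_def by simp
  finally show ?thesis .
qed

lemma prod_all: "(\<Prod>k<2*M+1. q^M + q^k) = q^(cc M) * (2 * (H q M)^2)"
proof -
  have e: "M*(M-1) div 2 + M * Suc M = cc M"
  proof -
    have "2*(M*(M-1) div 2 + M * Suc M) = 2 * cc M"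
      unfolding cc2 add_mult_distrib2 tri2 by (cases M) (simp_all add: algebra_simps)
    then show ?thesis by simp
  qed
  have e2: "2*M+1 = M + Suc M" by simp
  have "(\<Prod>k<2*M+1. q^M + q^k) = (\<Prod>k<M + Suc M. q^M + q^k)" unfolding e2 ..
  also have "\<dots> = q^(M*(M-1) div 2) * H q M * (q^(M*Suc M) * (2 * H q M))"
    unfolding prod_split prod_low prod_high ..
  also have "\<dots> = q^(cc M) * (2 * (H q M)^2)"
    unfolding e[symmetric] power_add by (simp add: power2_eq_square algebra_simps)
  finally show ?thesis .
qed

lemma X_cancel:
  fixes F G :: "'a::comm_ring_1 fps"
  assumes "fps_X^d * F = fps_X^d * G" shows "F = G"
proof (rule fps_ext)
  fix n
  have "(fps_X^d * F) $ (n + d) = (fps_X^d * G) $ (n + d)" using assms by simp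
  then show "F $ n = G $ n" by (simp add: fps_X_power_mult_nth)
qed

lemma S1_eq:
  "(\<Sum>i\<le>2*M+1. qbin (fps_X::'a::comm_ring_1 fps) (2*M+1) i * fps_X^(ex M i)) = 2 * (H fps_X M)^2"
proof (rule X_cancel[of "cc M"])
  have "fps_X^(cc M) * (2 * (H (fps_X::'a fps) M)^2) = (\<Prod>k<2*M+1. (fps_X::'a fps)^M + 1 * fps_X^k)"
    unfolding mult_1 by (rule prod_all[symmetric])
  also have "\<dots> = (\<Sum>i\<le>2*M+1. qbin fps_X (2*M+1) i * fps_X^(i*(i-1) div 2) * 1^i * (fps_X^M)^(2*M+1-i))"
    by (rule qbinom_thm)
  also have "\<dots> = (\<Sum>i\<le>2*M+1. fps_X^(cc M) * (qbin fps_X (2*M+1) i * fps_X^(ex M i)))"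
  proof (rule sum.cong)
    fix i assume "i \<in> {..2*M+1}"
    then have "i*(i-1) div 2 + M*(2*M+1-i) = cc M + ex M i" by (intro exp_arith) simp
    then show "qbin fps_X (2*M+1) i * fps_X^(i*(i-1) div 2) * 1^i * ((fps_X::'a fps)^M)^(2*M+1-i)
      = fps_X^(cc M) * (qbin fps_X (2*M+1) i * fps_X^(ex M i))"
      proof -
      have "fps_X^(i*(i-1) div 2) * ((fps_X::'a fps)^M)^(2*M+1-i) = fps_X^(cc M) * fps_X^(ex M i)"
        by (simp only: power_mult[symmetric] power_add[symmetric] \<open>_ = cc M + ex M i\<close>)
      then have "qbin fps_X (2*M+1) i * fps_X^(i*(i-1) div 2) * 1^i * ((fps_X::'a fps)^M)^(2*M+1-i)
         = qbin fps_X (2*M+1) i * (fps_X^(cc M) * fps_X^(ex M i))" by (simp add: mult.assoc)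
      then show ?thesis by (simp add: mult_ac)
    qed
  qed simp
  finally have eq: "fps_X^(cc M) * (2 * (H (fps_X::'a fps) M)^2) = (\<Sum>i\<le>2*M+1. fps_X^(cc M) * (qbin fps_X (2*M+1) i * fps_X^(ex M i)))" .
  show "fps_X^(cc M) * (\<Sum>i\<le>2*M+1. qbin (fps_X::'a fps) (2*M+1) i * fps_X^(ex M i))
     = fps_X^(cc M) * (2 * (H fps_X M)^2)" unfolding sum_distrib_left eq ..
qed


definition eqm :: "nat \<Rightarrow> 'a::comm_ring_1 fps \<Rightarrow> 'a fps \<Rightarrow> bool" where
  "eqm N f g \<longleftrightarrow> (\<forall>i\<le>N. f $ i = g $ i)"

lemma eqm_refl[simp]: "eqm N f f" by (simp add: eqm_def)
lemma eqm_sym: "eqm N f g \<Longrightarrow> eqm N g f" by (simp add: eqm_def)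
lemma eqm_trans: "eqm N f g \<Longrightarrow> eqm N g h \<Longrightarrow> eqm N f h" by (simp add: eqm_def)

lemma eqm_mult: "eqm N f f' \<Longrightarrow> eqm N g g' \<Longrightarrow> eqm N (f*g) (f'*g')"
  unfolding eqm_def fps_mult_nth by (auto intro!: sum.cong)

lemma eqm_add: "eqm N f f' \<Longrightarrow> eqm N g g' \<Longrightarrow> eqm N (f+g) (f'+g')"
  unfolding eqm_def by auto

lemma eqm_sum: "(\<And>i. i \<in> A \<Longrightarrow> eqm N (f i) (g i)) \<Longrightarrow> eqm N (\<Sum>i\<in>A. f i) (\<Sum>i\<in>A. g i)"
  unfolding eqm_def fps_sum_nth by (auto intro!: sum.cong)

lemma eqm_Xpow: "N < k \<Longrightarrow> eqm N (fps_X^k * f) 0"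
  unfolding eqm_def by (auto simp: fps_X_power_mult_nth)

lemma eqm_one_minus: "N < k \<Longrightarrow> eqm N (1 - fps_X^k) 1"
  unfolding eqm_def by auto

lemma eqm_cancel:
  fixes E f g :: "'a::field fps"
  assumes "E $ 0 \<noteq> 0" "eqm N (E*f) (E*g)" shows "eqm N f g"
proof -
  have "eqm N (inverse E * (E*f)) (inverse E * (E*g))" by (rule eqm_mult[OF eqm_refl assms(2)])
  then show ?thesis using inverse_mult_eq_1[OF assms(1)] by (simp add: mult.assoc[symmetric])
qed

lemma poch_nth0: "poch (fps_X::'a::comm_ring_1 fps) k $ 0 = 1"
  by (induction k) (simp_all add: poch_Suc)

lemma poch_eqm: "N \<le> k \<Longrightarrow> eqm N (poch (fps_X::'a::comm_ring_1 fps) k) (poch fps_X N)"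
proof (induction k rule: dec_induct)
  case base then show ?case by simp
next
  case (step k)
  have "eqm N (poch fps_X k * (1 - fps_X^Suc k)) (poch (fps_X::'a fps) N * 1)"
    using step by (intro eqm_mult eqm_one_minus) auto
  then show ?case by (simp add: poch_Suc)
qed

lemma qbin_eqm:
  fixes N m i :: nat
  assumes "N < i" "N < m - i" "i \<le> m"
  shows "eqm N (qbin (fps_X::rat fps) m i) (inverse (poch fps_X N))"
proof -
  let ?P = "poch (fps_X::rat fps) N"
  have P0: "?P $ 0 \<noteq> 0" by (simp add: poch_nth0)
  have "eqm N (poch fps_X i * poch fps_X (m - i) * qbin fps_X m i) (poch fps_X m)"
    unfolding qbin_poch[OF assms(3)] by simp
  moreover have "eqm N (poch fps_X i * poch fps_X (m - i) * qbin fps_X m i) (?P * ?P * qbin fps_X m i)"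
    using assms by (intro eqm_mult poch_eqm eqm_refl) auto
  moreover have "eqm N (poch fps_X m) ?P" using assms by (intro poch_eqm) auto
  ultimately have h: "eqm N (?P * ?P * qbin fps_X m i) ?P"
    by (meson eqm_sym eqm_trans)
  then have "eqm N (?P * (?P * qbin fps_X m i)) (?P * 1)" by (simp add: mult.assoc)
  then have "eqm N (?P * qbin fps_X m i) 1" by (rule eqm_cancel[OF P0])
  then have "eqm N (?P * qbin fps_X m i) (?P * inverse ?P)"
    using inverse_mult_eq_1'[OF P0] by simp
  then show ?thesis by (rule eqm_cancel[OF P0])
qed

lemma T_ge: "t \<le> T t"
proof -
  have "2*t \<le> 2 * T t" unfolding T2 by simp
  then show ?thesis by simp
qed

lemma ex_small:
  assumes "ex M i \<le> N" "2*N+1 \<le> M" "i \<le> 2*M+1"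
  shows "N < i \<and> N < (2*M+1) - i"
proof (cases "M < i")
  case True
  then have "i - M - 1 \<le> N" using assms T_ge[of "i - M - 1"] unfolding ex_def by simp
  then show ?thesis using True assms by simp
next
  case False
  then have "M - i \<le> N" using assms T_ge[of "M - i"] unfolding ex_def by simp
  then have a: "M \<le> i + N" by simp
  have b: "N < i" using a assms(2) by linarith
  have c: "N < (2*M+1) - i" using False assms(2) by linarith
  show ?thesis using b c by simp
qed

lemma sum_split: "(\<Sum>k<a+(b::nat). f k) = (\<Sum>k<a. f k) + (\<Sum>s<b. f (a+s))"
  by (induction b) (auto simp: algebra_simps)

definition psi :: "nat \<Rightarrow> 'a::comm_ring_1 fps" where
  "psi M = (\<Sum>t\<le>M. fps_X^(T t))"

lemma S_eq: "(\<Sum>i\<le>2*M+1. (fps_X::'a::comm_ring_1 fps)^(ex M i)) = 2 * psi M"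
proof -
  have e: "{..2*M+1} = {..<Suc M + Suc M}" by auto
  have "(\<Sum>i\<le>2*M+1. (fps_X::'a fps)^(ex M i)) = (\<Sum>i<Suc M. fps_X^(ex M i)) + (\<Sum>s<Suc M. fps_X^(ex M (Suc M + s)))"
    unfolding e sum_split ..
  also have "(\<Sum>s<Suc M. (fps_X::'a fps)^(ex M (Suc M + s))) = psi M"
    unfolding psi_def ex_def lessThan_Suc_atMost by simp
  also have "(\<Sum>i<Suc M. (fps_X::'a fps)^(ex M i)) = (\<Sum>i\<in>{0..M}. fps_X^(T (M - i)))"
    unfolding ex_def lessThan_Suc_atMost atMost_atLeast0 by simp
  also have "\<dots> = (\<Sum>i\<in>{0..M}. fps_X^(T (M - (M + 0 - i))))"
    by (rule sum.atLeastAtMost_rev)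
  also have "\<dots> = psi M" unfolding psi_def atMost_atLeast0 by (intro sum.cong) auto
  finally show ?thesis by simp
qed


lemmas [trans] = eqm_trans

lemma psi_eqm:
  assumes M: "2*N+1 \<le> M"
  shows "eqm N (psi M :: rat fps) (poch fps_X N * (H fps_X M)^2)"
proof -
  let ?P = "poch (fps_X::rat fps) N"
  let ?B = "inverse ?P"
  have P0: "?P $ 0 \<noteq> 0" by (simp add: poch_nth0)
  have "eqm N (\<Sum>i\<le>2*M+1. qbin (fps_X::rat fps) (2*M+1) i * fps_X^(ex M i))
              (\<Sum>i\<le>2*M+1. ?B * fps_X^(ex M i))"
  proof (rule eqm_sum)
    fix i assume i: "i \<in> {..2*M+1}"
    show "eqm N (qbin (fps_X::rat fps) (2*M+1) i * fps_X^(ex M i)) (?B * fps_X^(ex M i))"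
    proof (cases "ex M i \<le> N")
      case True
      then have "N < i \<and> N < (2*M+1) - i" using ex_small[OF True M] i by simp
      then have "eqm N (qbin (fps_X::rat fps) (2*M+1) i) ?B" using i by (intro qbin_eqm) auto
      then show ?thesis by (rule eqm_mult) simp
    next
      case False
      then have a: "eqm N (fps_X^(ex M i) * qbin (fps_X::rat fps) (2*M+1) i) 0"
        and b: "eqm N (fps_X^(ex M i) * ?B) 0" by (auto intro: eqm_Xpow)
      show ?thesis using eqm_trans[OF a eqm_sym[OF b]] by (simp add: mult.commute)
    qed
  qed
  then have "eqm N (2 * (H fps_X M)^2) (?B * (2 * psi M))"
    unfolding S1_eq sum_distrib_left[symmetric] S_eq .
  then have "eqm N (?P * (2 * (H fps_X M)^2)) (?P * (?B * (2 * psi M)))"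
    by (rule eqm_mult[OF eqm_refl])
  then have "eqm N (2 * (?P * (H fps_X M)^2)) (2 * psi M)"
    using inverse_mult_eq_1'[OF P0] by (simp add: mult.assoc[symmetric] mult.commute[of ?P 2])
  then have h2: "eqm N (2 * psi M) (2 * (?P * (H fps_X M)^2))" by (rule eqm_sym)
  show ?thesis by (rule eqm_cancel[of 2 N, OF _ h2]) simp
qed

definition Od :: "'a::comm_ring_1 \<Rightarrow> nat \<Rightarrow> 'a" where "Od q M = (\<Prod>t<M. 1 - q^(2*t+1))"
definition Ev :: "'a::comm_ring_1 \<Rightarrow> nat \<Rightarrow> 'a" where "Ev q M = (\<Prod>t<M. 1 - q^(2*t+2))"

lemma poch_double: "poch q (2*M) = Od q M * Ev q M"
proof (induction M)
  case 0 then show ?case by (simp add: Od_def Ev_def)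
next
  case (Suc M)
  have e: "2 * Suc M = Suc (Suc (2*M))" by simp
  show ?case unfolding e poch_Suc Suc.IH by (simp add: Od_def Ev_def algebra_simps)
qed

lemma poch_H: "poch q M * H q M = Ev q M"
proof (induction M)
  case 0 then show ?case by (simp add: H_def Ev_def)
next
  case (Suc M)
  have "poch q (Suc M) * H q (Suc M) = (poch q M * H q M) * ((1 - q^Suc M) * (1 + q^Suc M))"
    by (simp add: poch_Suc H_def algebra_simps)
  also have "(1 - q^Suc M) * (1 + q^Suc M) = 1 - q^(2*M+2)"
  proof -
    have e: "2*M+2 = Suc M + Suc M" by simp
    have "q^(2*M+2) = q^Suc M * q^Suc M" unfolding e by (rule power_add)
    then show ?thesis by (simp add: algebra_simps)
  qed
  finally show ?case using Suc.IH by (simp add: Ev_def)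
qed

lemma psi_Od:
  assumes M: "2*N+1 \<le> M"
  shows "eqm N (psi M * Od fps_X M :: rat fps) (Ev fps_X M)"
proof -
  let ?X = "fps_X :: rat fps"
  have pM: "eqm N (poch ?X M) (poch ?X N)" using M by (intro poch_eqm) simp
  have p2M: "eqm N (poch ?X (2*M)) (poch ?X N)" using M by (intro poch_eqm) simp
  have "eqm N (psi M * Od ?X M) (poch ?X N * (H ?X M)^2 * Od ?X M)"
    by (intro eqm_mult psi_eqm M eqm_refl)
  also have "eqm N (poch ?X N * (H ?X M)^2 * Od ?X M) (poch ?X M * (H ?X M)^2 * Od ?X M)"
    by (intro eqm_mult eqm_refl eqm_sym[OF pM])
  also have "poch ?X M * (H ?X M)^2 * Od ?X M = H ?X M * poch ?X (2*M)"
    unfolding power2_eq_square poch_double poch_H[symmetric] by (simp only: mult_ac)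
  also have "eqm N (H ?X M * poch ?X (2*M)) (H ?X M * poch ?X M)"
    by (intro eqm_mult eqm_refl eqm_trans[OF p2M eqm_sym[OF pM]])
  also have "H ?X M * poch ?X M = Ev ?X M" by (simp add: poch_H[symmetric] mult.commute)
  finally show ?thesis by simp
qed


definition FF :: "(nat \<Rightarrow> nat \<Rightarrow> 'a::comm_ring_1) \<Rightarrow> nat \<Rightarrow> 'a fps" where
  "FF a k = Abs_fps (\<lambda>j. if k dvd j then a k (j div k) else 0)"

definition MS :: "nat set \<Rightarrow> nat \<Rightarrow> nat multiset set" where
  "MS S m = {p. set_mset p \<subseteq> S \<and> sum_mset p = m}"

lemma size_le_sum: "0 \<notin> set_mset p \<Longrightarrow> size p \<le> sum_mset (p::nat multiset)"
  by (induction p) (auto simp: Suc_le_eq)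

lemma finite_MS: "finite S \<Longrightarrow> 0 \<notin> S \<Longrightarrow> finite (MS S m)"
proof -
  assume S: "finite S" "0 \<notin> S"
  have "MS S m \<subseteq> (\<Union>s\<le>m. multisets_of_size S s)"
  proof
    fix p assume "p \<in> MS S m"
    then have "set_mset p \<subseteq> S" "sum_mset p = m" by (auto simp: MS_def)
    moreover have "size p \<le> sum_mset p" using S(2) \<open>set_mset p \<subseteq> S\<close> by (intro size_le_sum) auto
    ultimately show "p \<in> (\<Union>s\<le>m. multisets_of_size S s)" by (auto simp: multisets_of_size_def)
  qed
  moreover have "finite (\<Union>s\<le>m. multisets_of_size S s)" using S by auto
  ultimately show ?thesis by (rule finite_subset)
qed

lemma prod_FF_nth:
  assumes "finite S" "0 \<notin> S"
  shows "(\<Prod>k\<in>S. FF a k) $ m = (\<Sum>p\<in>MS S m. \<Prod>k\<in>S. a k (count p k))"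
  using assms
proof (induction S arbitrary: m rule: finite_induct)
  case empty
  have "MS {} m = (if m = 0 then {{#}} else {})" by (auto simp: MS_def)
  then show ?case by simp
next
  case (insert k S m)
  have k0: "0 < k" using insert.prems by auto
  have S0: "0 \<notin> S" using insert.prems by auto
  define w where "w p = (\<Prod>s\<in>S. a s (count p s))" for p
  define J where "J = {j\<in>{0..m}. k dvd j}"
  define B where "B j = MS S (m - j)" for j
  have finB: "finite (B j)" for j unfolding B_def using finite_MS[OF insert.hyps(1) S0] .
  have "(\<Prod>k\<in>insert k S. FF a k) $ m = (FF a k * (\<Prod>k\<in>S. FF a k)) $ m"
    using insert.hyps by simp
  also have "\<dots> = (\<Sum>j=0..m. (if k dvd j then a k (j div k) else 0) * (\<Sum>p\<in>B j. w p))"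
    unfolding fps_mult_nth insert.IH[OF S0] B_def w_def by (simp add: FF_def)
  also have "\<dots> = (\<Sum>j\<in>J. a k (j div k) * (\<Sum>p\<in>B j. w p))"
    unfolding J_def by (subst sum.inter_filter) (auto intro!: sum.cong)
  also have "\<dots> = (\<Sum>x\<in>Sigma J B. a k (fst x div k) * w (snd x))"
  proof -
    have fJ: "finite J" by (simp add: J_def)
    have "(\<Sum>j\<in>J. a k (j div k) * (\<Sum>p\<in>B j. w p)) = (\<Sum>j\<in>J. \<Sum>p\<in>B j. a k (j div k) * w p)"
      by (simp add: sum_distrib_left)
    also have "\<dots> = (\<Sum>x\<in>Sigma J B. a k (fst x div k) * w (snd x))"
      using sum.Sigma[OF fJ, of B "\<lambda>j p. a k (j div k) * w p"] finB by (simp add: split_def)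
    finally show ?thesis .
  qed
  also have "\<dots> = (\<Sum>p\<in>MS (insert k S) m. \<Prod>k\<in>insert k S. a k (count p k))"
  proof (rule sum.reindex_bij_witness[where j="\<lambda>x. snd x + replicate_mset (fst x div k) k"
        and i="\<lambda>p. (k * count p k, filter_mset (\<lambda>x. x \<noteq> k) p)"])
    fix x assume x: "x \<in> Sigma J B"
    then obtain j p' where xe: "x = (j, p')" and j: "j \<le> m" "k dvd j" and p': "set_mset p' \<subseteq> S" "sum_mset p' = m - j"
      by (auto simp: J_def B_def MS_def)
    have c: "count p' k = 0" using p' insert.hyps(2) by (auto simp flip: not_in_iff)
    have f: "filter_mset (\<lambda>x. x \<noteq> k) p' = p'" using p' insert.hyps(2) by (subst filter_mset_eq_conv) auto
    show "(k * count (snd x + replicate_mset (fst x div k) k) k,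
           filter_mset (\<lambda>x. x \<noteq> k) (snd x + replicate_mset (fst x div k) k)) = x"
      using c f j by (simp add: xe)
    show "snd x + replicate_mset (fst x div k) k \<in> MS (insert k S) m"
      using p' j by (auto simp: xe MS_def)
    have "(\<Prod>s\<in>S. a s (count (p' + replicate_mset (j div k) k) s)) = w p'"
      unfolding w_def using insert.hyps(2) by (intro prod.cong) auto
    then show "(\<Prod>s\<in>insert k S. a s (count (snd x + replicate_mset (fst x div k) k) s)) =
          a k (fst x div k) * w (snd x)"
      using insert.hyps c by (simp add: xe)
  next
    fix p assume p: "p \<in> MS (insert k S) m"
    have part: "p = filter_mset (\<lambda>x. x \<noteq> k) p + replicate_mset (count p k) k"
      using multiset_partition[where M=p and P="\<lambda>x. x = k"] filter_eq_replicate_mset[where D=p and x=k]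
      by (simp add: add.commute)
    have sp: "sum_mset p = sum_mset (filter_mset (\<lambda>x. x \<noteq> k) p) + count p k * k"
      by (subst part) simp
    show "snd (k * count p k, filter_mset (\<lambda>x. x \<noteq> k) p) +
          replicate_mset (fst (k * count p k, filter_mset (\<lambda>x. x \<noteq> k) p) div k) k = p"
      using k0 part by simp
    show "(k * count p k, filter_mset (\<lambda>x. x \<noteq> k) p) \<in> Sigma J B"
      using p sp by (auto simp: J_def B_def MS_def mult.commute)
  qed
  finally show ?case .
qed


lemmas [trans] = eqm_trans

definition sa :: "nat \<Rightarrow> nat \<Rightarrow> rat" where
  "sa k c = (if odd k \<and> 1 < c then 0 else (-1)^(k*c))"

lemma FF_odd: "odd k \<Longrightarrow> FF sa k = 1 - fps_X^k"
proof (rule fps_ext)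
  fix j assume k: "odd k"
  then have k0: "k \<noteq> 0" using odd_pos by force
  show "FF sa k $ j = (1 - fps_X^k) $ j"
  proof (cases "k dvd j")
    case True
    then obtain c where c: "j = k*c" by (auto elim: dvdE)
    consider "c = 0" | "c = 1" | "1 < c" by linarith
    then show ?thesis
    proof cases
      case 1 then show ?thesis using c k0 by (simp add: FF_def sa_def)
    next
      case 2 then show ?thesis using c k k0 by (simp add: FF_def sa_def)
    next
      case 3
      then have "j \<noteq> k" "j \<noteq> 0" using c k0 by auto
      then show ?thesis using c k k0 3 by (simp add: FF_def sa_def)
    qed
  next
    case False
    then have "j \<noteq> k" "j \<noteq> 0" by (metis dvd_refl, metis dvd_0_right)
    then show ?thesis using False by (simp add: FF_def)
  qed
qed

lemma FF_even: "even k \<Longrightarrow> 0 < k \<Longrightarrow> FF sa k * (1 - fps_X^k) = 1"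
proof (rule fps_ext)
  fix j assume k: "even k" "0 < k"
  have nth: "FF sa k $ i = (if k dvd i then 1 else 0)" for i
  proof (cases "k dvd i")
    case True
    then have "even i" using dvd_trans[OF k(1)] by blast
    then show ?thesis using k True by (simp add: FF_def sa_def)
  qed (simp add: FF_def)
  have "(FF sa k * (1 - fps_X^k)) $ j = FF sa k $ j - (if j < k then 0 else FF sa k $ (j - k))"
    by (simp add: algebra_simps fps_X_power_mult_right_nth fps_X_power_mult_nth)
  also have "\<dots> = (if j = 0 then 1 else 0)"
  proof (cases "j < k")
    case True then show ?thesis using k by (auto simp: nth dest: dvd_imp_le)
  next
    case False
    then have "k dvd j \<longleftrightarrow> k dvd (j - k)" by (simp add: dvd_minus_self)
    then show ?thesis using False k by (simp add: nth)
  qed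
  finally show "(FF sa k * (1 - fps_X^k)) $ j = (1::rat fps) $ j" by simp
qed

definition Q :: "nat \<Rightarrow> rat fps" where "Q M = (\<Prod>k\<in>{1..2*M}. FF sa k)"

lemma Q_Ev: "Q M * Ev fps_X M = Od fps_X M"
proof (induction M)
  case 0 then show ?case by (simp add: Q_def Ev_def Od_def)
next
  case (Suc M)
  have e: "2 * Suc M = Suc (Suc (2*M))" by simp
  have Qs: "Q (Suc M) = Q M * FF sa (2*M+1) * FF sa (2*M+2)"
    unfolding Q_def e by (simp add: prod.cl_ivl_Suc)
  have "Q (Suc M) * Ev fps_X (Suc M) = (Q M * Ev fps_X M) * FF sa (2*M+1) * (FF sa (2*M+2) * (1 - fps_X^(2*M+2)))"
    unfolding Qs by (simp add: Ev_def algebra_simps)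
  also have "\<dots> = Od fps_X M * (1 - fps_X^(2*M+1))"
  proof -
    have f1: "FF sa (2*M+2) * (1 - fps_X^(2*M+2)) = 1" by (rule FF_even) auto
    have f2: "FF sa (2*M+1) = 1 - fps_X^(2*M+1)" by (rule FF_odd) auto
    show ?thesis unfolding Suc.IH f1 f2 by simp
  qed
  also have "\<dots> = Od fps_X (Suc M)" by (simp add: Od_def)
  finally show ?case .
qed

lemma Ev_nth0: "Ev (fps_X::'a::comm_ring_1 fps) M $ 0 = 1"
  by (induction M) (simp_all add: Ev_def)

lemma psiQ: "2*N+1 \<le> M \<Longrightarrow> eqm N (psi M * Q M) 1"
proof -
  assume M: "2*N+1 \<le> M"
  have "eqm N (Ev fps_X M * (psi M * Q M)) (Ev fps_X M * 1)"
  proof -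
    have e: "Ev fps_X M * (psi M * Q M) = (psi M :: rat fps) * Od fps_X M"
      using Q_Ev[of M] by (simp add: algebra_simps)
    show ?thesis unfolding e using psi_Od[OF M] by simp
  qed
  then show ?thesis by (rule eqm_cancel[rotated]) (simp add: Ev_nth0)
qed

lemma sum_mset_count: "finite S \<Longrightarrow> set_mset p \<subseteq> S \<Longrightarrow> sum_mset p = (\<Sum>k\<in>S. k * count p k)"
proof (induction p)
  case empty then show ?case by simp
next
  case (add x p)
  have "(\<Sum>k\<in>S. k * count (add_mset x p) k) = (\<Sum>k\<in>S. k * count p k) + (\<Sum>k\<in>S. if k = x then k else 0)"
    by (subst sum.distrib[symmetric]) (rule sum.cong, auto)
  also have "(\<Sum>k\<in>S. if k = x then k else 0) = x" using add.prems by (simp add: sum.delta)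
  finally show ?case using add by simp
qed

lemma mem_le_sum: "x \<in># p \<Longrightarrow> x \<le> sum_mset (p::nat multiset)"
  by (induction p) auto

lemma pod_coeff:
  assumes "m \<le> 2*M" shows "Q M $ m = (-1)^m * of_nat (pod m)"
proof -
  define V where "V p \<longleftrightarrow> (\<forall>x. odd x \<longrightarrow> count p x \<le> 1)" for p :: "nat multiset"
  have MSe: "MS {1..2*M} m = partitions m"
  proof (rule set_eqI)
    fix p
    show "p \<in> MS {1..2*M} m \<longleftrightarrow> p \<in> partitions m"
      using assms mem_le_sum[of _ p] unfolding MS_def partitions_def
      by (auto, fastforce, metis le_trans)
  qed
  have fin: "finite (partitions m)" using finite_MS[of "{1..2*M}" m] MSe by simp
  have w: "(\<Prod>k\<in>{1..2*M}. sa k (count p k)) = (if V p then (-1)^m else 0)" if p: "p \<in> partitions m" for p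
  proof (cases "V p")
    case True
    have sub: "set_mset p \<subseteq> {1..2*M}" using p MSe by (auto simp: MS_def)
    have "(\<Prod>k\<in>{1..2*M}. sa k (count p k)) = (\<Prod>k\<in>{1..2*M}. (-1)^(k * count p k))"
      using True unfolding V_def sa_def by (intro prod.cong) force+
    also have "\<dots> = (-1)^(\<Sum>k\<in>{1..2*M}. k * count p k)" by (simp add: power_sum)
    also have "(\<Sum>k\<in>{1..2*M}. k * count p k) = m"
      using sum_mset_count[OF _ sub] p by (simp add: partitions_def)
    finally show ?thesis using True by simp
  next
    case False
    then obtain x where x: "odd x" "1 < count p x" unfolding V_def by force
    then have "x \<in># p" by (simp flip: count_greater_zero_iff)
    then have "x \<in> {1..2*M}" using p assms mem_le_sum[OF \<open>x \<in># p\<close>] by (auto simp: partitions_def)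
    then have "(\<Prod>k\<in>{1..2*M}. sa k (count p k)) = 0"
      using x by (intro prod_zero) (auto simp: sa_def)
    then show ?thesis using False by simp
  qed
  have "Q M $ m = (\<Sum>p\<in>partitions m. \<Prod>k\<in>{1..2*M}. sa k (count p k))"
    unfolding Q_def MSe[symmetric] by (rule prod_FF_nth) auto
  also have "\<dots> = (\<Sum>p\<in>partitions m. if V p then (-1)^m else 0)"
    by (intro sum.cong refl w)
  also have "\<dots> = (\<Sum>p\<in>{p\<in>partitions m. V p}. (-1)^m)"
    by (rule sum.inter_filter[OF fin, symmetric])
  also have "\<dots> = (-1)^m * of_nat (pod m)"
    unfolding pod_def V_def by simp
  finally show ?thesis .
qed


definition ca :: "nat \<Rightarrow> int" where
  "ca m = (\<Sum>c\<in>compositions P3 m. (-1) ^ length c)"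

lemma P3_pos: "t \<in> P3 \<Longrightarrow> 0 < t"
proof -
  assume "t \<in> P3"
  then obtain m where m: "t = m*(m+1) div 2" "1 \<le> m" by (auto simp: P3_def)
  have "2 * t = m*(m+1)" unfolding m(1) by (intro two_div) auto
  then show ?thesis using m(2) by (cases t) auto
qed

lemma len_le_sum: "\<forall>x\<in>set c. 0 < x \<Longrightarrow> length c \<le> sum_list (c::nat list)"
  by (induction c) auto

lemma finite_comp: "finite (compositions P3 m)"
proof (rule finite_subset)
  show "compositions P3 m \<subseteq> {xs. set xs \<subseteq> {0..m} \<and> length xs \<le> m}"
    by (auto simp: compositions_def dest: member_le_sum_list len_le_sum)
  show "finite {xs. set xs \<subseteq> {0..m} \<and> length xs \<le> m}" by (rule finite_lists_length_le) simp
qed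

lemma ca_0: "ca 0 = 1"
proof -
  have "c = []" if "c \<in> compositions P3 0" for c
  proof -
    have "sum_list c = 0" "\<forall>x\<in>set c. 0 < x" using that by (auto simp: compositions_def)
    with len_le_sum[of c] show ?thesis by simp
  qed
  then have "compositions P3 0 = {[]}" by (auto simp: compositions_def)
  then show ?thesis by (simp add: ca_def)
qed

lemma ca_rec: "0 < m \<Longrightarrow> ca m = - (\<Sum>t\<in>{t\<in>P3. t \<le> m}. ca (m - t))"
proof -
  assume m: "0 < m"
  let ?S = "Sigma {t\<in>P3. t \<le> m} (\<lambda>t. compositions P3 (m - t))"
  have fin: "finite {t\<in>P3. t \<le> m}" by simp
  have "(\<Sum>t\<in>{t\<in>P3. t \<le> m}. ca (m - t)) = (\<Sum>t\<in>{t\<in>P3. t \<le> m}. \<Sum>c\<in>compositions P3 (m - t). (-1)^length c)"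
    by (simp add: ca_def)
  also have "\<dots> = (\<Sum>x\<in>?S. (-1)^length (snd x))"
    using sum.Sigma[OF fin, of "\<lambda>t. compositions P3 (m - t)" "\<lambda>t c. (-1::int)^length c"] finite_comp
    by (simp add: split_def)
  finally have e: "(\<Sum>t\<in>{t\<in>P3. t \<le> m}. ca (m - t)) = (\<Sum>x\<in>?S. (-1)^length (snd x))" .
  have "(\<Sum>x\<in>?S. - ((-1::int)^length (snd x))) = (\<Sum>c\<in>compositions P3 m. (-1)^length c)"
  proof (rule sum.reindex_bij_witness[where i="\<lambda>c. (hd c, tl c)" and j="\<lambda>x. fst x # snd x"])
    fix x assume "x \<in> ?S"
    then show "(hd (fst x # snd x), tl (fst x # snd x)) = x" by auto
    show "fst x # snd x \<in> compositions P3 m" using \<open>x \<in> ?S\<close>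
      by (auto simp: compositions_def P3_pos)
    show "(-1::int)^length (fst x # snd x) = - ((-1)^length (snd x))" by simp
  next
    fix c assume c: "c \<in> compositions P3 m"
    then have "c \<noteq> []" using m by (auto simp: compositions_def)
    then show "fst (hd c, tl c) # snd (hd c, tl c) = c" by simp
    show "(hd c, tl c) \<in> ?S" using c \<open>c \<noteq> []\<close>
      by (cases c) (auto simp: compositions_def)
  qed
  then have "ca m = - (\<Sum>x\<in>?S. (-1)^length (snd x))" unfolding ca_def by (simp add: sum_negf)
  then show ?thesis using e by simp
qed

lemma T_Suc: "T (Suc t) = T t + Suc t"
proof -
  have "2 * T (Suc t) = 2 * (T t + Suc t)" unfolding add_mult_distrib2 T2 by simp
  then show ?thesis by simp
qed

lemma T_mono: "strict_mono T"
  unfolding strict_mono_Suc_iff by (simp add: T_Suc)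

lemma T_P3: "(\<exists>t. T t = i) \<longleftrightarrow> (i = 0 \<or> i \<in> P3)"
proof
  assume "\<exists>t. T t = i"
  then obtain t where "T t = i" by blast
  then show "i = 0 \<or> i \<in> P3"
    by (cases "t = 0") (auto simp: T_def P3_def)
next
  assume "i = 0 \<or> i \<in> P3"
  then show "\<exists>t. T t = i"
  proof
    assume "i = 0" then show ?thesis by (intro exI[of _ 0]) (simp add: T_def)
  next
    assume "i \<in> P3" then show ?thesis by (auto simp: P3_def T_def)
  qed
qed

lemma psi_nth:
  assumes "i \<le> M" shows "(psi M :: 'a::comm_ring_1 fps) $ i = (if i = 0 \<or> i \<in> P3 then 1 else 0)"
proof (cases "\<exists>t. T t = i")
  case True
  then obtain t where t: "T t = i" by blast
  have "t \<le> M" using T_ge[of t] t assms by simp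
  have "(psi M :: 'a fps) $ i = (\<Sum>s\<le>M. if s = t then 1 else 0)"
    unfolding psi_def fps_sum_nth
    by (intro sum.cong refl) (use t strict_mono_eq[OF T_mono] in auto)
  also have "\<dots> = 1" using \<open>t \<le> M\<close> by simp
  finally show ?thesis using True T_P3 by simp
next
  case False
  then have "(psi M :: 'a fps) $ i = 0" unfolding psi_def fps_sum_nth by (auto intro!: sum.neutral)
  then show ?thesis using False T_P3 by simp
qed

lemma Q_rec:
  assumes M: "2*N+1 \<le> M" and m: "m \<le> N"
  shows "Q M $ m = (if m = 0 then 1 else 0) - (\<Sum>t\<in>{t\<in>P3. t \<le> m}. Q M $ (m - t))"
proof -
  have "(psi M * Q M) $ m = (1::rat fps) $ m" using psiQ[OF M] m unfolding eqm_def by blast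
  moreover have "(psi M * Q M) $ m = (\<Sum>i=0..m. (if i = 0 \<or> i \<in> P3 then 1 else 0) * Q M $ (m - i))"
    unfolding fps_mult_nth using m M by (intro sum.cong refl) (simp add: psi_nth)
  moreover have "(\<Sum>i=0..m. (if i = 0 \<or> i \<in> P3 then 1 else 0) * Q M $ (m - i))
      = Q M $ m + (\<Sum>i\<in>{Suc 0..m}. if i \<in> P3 then Q M $ (m - i) else 0)"
    by (subst sum.atLeast_Suc_atMost) (auto intro!: sum.cong)
  moreover have "(\<Sum>i\<in>{Suc 0..m}. if i \<in> P3 then Q M $ (m - i) else 0) = (\<Sum>t\<in>{t\<in>P3. t \<le> m}. Q M $ (m - t))"
  proof -
    have "{t\<in>P3. t \<le> m} = {i\<in>{Suc 0..m}. i \<in> P3}" using P3_pos by fastforce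
    then show ?thesis by (simp only:) (subst sum.inter_filter, auto)
  qed
  ultimately show ?thesis by simp
qed

theorem corollary1:
  fixes n :: nat
  shows "int (pod n) = (-1) ^ n * (\<Sum>c\<in>compositions P3 n. (-1) ^ length c)"
proof -
  define M where "M = 2*n+1"
  have M: "2*n+1 \<le> M" by (simp add: M_def)
  have key: "m \<le> n \<Longrightarrow> (of_int (ca m) :: rat) = Q M $ m" for m
  proof (induction m rule: less_induct)
    case (less m)
    show ?case
    proof (cases "m = 0")
      case True
      have e0: "{t\<in>P3. t \<le> m} = {}" using P3_pos True by fastforce
      have "Q M $ m = 1" using Q_rec[OF M less.prems] True unfolding e0 by simp
      then show ?thesis using True by (simp add: ca_0)
    next
      case False
      have "(of_int (ca m) :: rat) = - (\<Sum>t\<in>{t\<in>P3. t \<le> m}. of_int (ca (m - t)))"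
        using ca_rec[of m] False by simp
      also have "\<dots> = - (\<Sum>t\<in>{t\<in>P3. t \<le> m}. Q M $ (m - t))"
        using less.IH less.prems False P3_pos by (intro arg_cong[where f=uminus] sum.cong refl) auto
      also have "\<dots> = Q M $ m" using Q_rec[OF M less.prems] False by simp
      finally show ?thesis .
    qed
  qed
  have "(of_int (ca n) :: rat) = (-1)^n * of_nat (pod n)"
    using key[of n] pod_coeff[of n M] by (simp add: M_def)
  moreover have sq: "((-1::rat)^n) * (-1)^n = 1" by (simp flip: power_add)
  ultimately have "(of_int ((-1)^n * ca n) :: rat) = ((-1)^n * (-1)^n) * of_nat (pod n)"
    by (simp add: mult.assoc)
  then have "(of_int ((-1)^n * ca n) :: rat) = of_int (int (pod n))"
    by (simp only: sq mult_1)
  then have "(-1)^n * ca n = int (pod n)" by (rule of_int_eq_iff[THEN iffD1])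
  then show ?thesis by (simp add: ca_def)
qed


end
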